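(* Let either $n\ge 3$ and $k\ge 4$, or $n\ge 4$ and $k=3$. Let $\alpha=a_1\cdots a_n\in\mathbf{A}_k(n)\setminus\{r_{n,k}\}$ be such that $\mathrm{LastNonMax}(\alpha)\notin\mathbf{A}_k(n)$ and $\mathrm{LastSymbol}(\alpha)\notin\mathbf{A}_k(n)$. If $k\ge 4$, then $\mathrm{FirstNonMin}(\alpha)\in\mathbf{A}_k(n)$. If $k=3$ and $\mathrm{FirstNonMin}(\alpha)\notin\mathbf{A}_3(n)$, then $\alpha=0\gamma 012$ for some palindrome $\gamma$, and $\mathrm{SecondLastNonMax}(\alpha)\in\mathbf{A}_3(n)$.
   Context: Let $\Sigma=\{0,1,\dots,k-1\}$. Strings are compared lexicographically ($\alpha<\beta$ if $\alpha$ is a proper prefix of $\beta$, or $\alpha$ has the smaller symbol at the first index where they differ). For $\alpha=a_1\cdots a_n$, $\alpha^R=a_n\cdots a_1$; $\alpha$ is a palindrome if $\alpha=\alpha^R$; $[\alpha]$ is the set of rotations of $\alpha$. $\alpha$ is a necklace if it is the lexicographically smallest element of $[\alpha]$; a bracelet if it is the lexicographically smallest element of $[\alpha]\cup[\alpha^R]$. A necklace $\alpha$ is symmetric if $\alpha^R\in[\alpha]$, asymmetric otherwise. $\mathbf{A}_k(n)$ is the set of asymmetric bracelets of length $n$ over $\Sigma$. $r_{n,k}=0^{n-2}(k-2)(k-1)$. Operations on $\alpha=a_1\cdots a_n$: $\mathrm{LastNonMax}(\alpha)=a_1\cdots a_{j-1}(a_j+1)(k-1)^{n-j}$, where $j$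 is the index of the last symbol different from $k-1$; $\mathrm{LastSymbol}(\alpha)$ is the necklace (smallest rotation) of $a_1\cdots a_{n-1}((a_n+1)\bmod k)$; $\mathrm{FirstNonMin}(\alpha)=0^{i-1}(a_i-1)a_{i+1}\cdots a_n$, where $i$ is the index of the first nonzero symbol; $\mathrm{SecondLastNonMax}(\alpha)=a_1\cdots a_{\ell-1}(a_\ell+1)a_{\ell+1}\cdots a_n$, where $\ell$ is the index of the second-last symbol different from $k-1$. *)

theory Defs
  imports Main
begin

text \<open>Strings over \<Sigma> = {0,...,k-1} are lists of naturals with all entries < k.
  Positions below are 0-based (the paper uses 1-based indices).\<close>

fun lex_less :: "nat list \<Rightarrow> nat list \<Rightarrow> bool" where
  "lex_less [] ys = (ys \<noteq> [])"
| "lex_less (x # xs) [] = False"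
| "lex_less (x # xs) (y # ys) = (x < y \<or> (x = y \<and> lex_less xs ys))"

definition lex_le :: "nat list \<Rightarrow> nat list \<Rightarrow> bool" where
  "lex_le xs ys \<longleftrightarrow> xs = ys \<or> lex_less xs ys"

definition rots :: "nat list \<Rightarrow> nat list set" where
  "rots xs = {rotate i xs | i. i < length xs}"

definition is_necklace :: "nat list \<Rightarrow> bool" where
  "is_necklace xs \<longleftrightarrow> (\<forall>ys \<in> rots xs. lex_le xs ys)"

definition is_bracelet :: "nat list \<Rightarrow> bool" where
  "is_bracelet xs \<longleftrightarrow> (\<forall>ys \<in> rots xs \<union> rots (rev xs). lex_le xs ys)"

definition is_palindrome :: "nat list \<Rightarrow> bool" where
  "is_palindrome xs \<longleftrightarrow> xs = rev xs"

definition necklace_of :: "nat list \<Rightarrow> nat list" where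
  "necklace_of xs = (THE ys. ys \<in> rots xs \<and> (\<forall>zs \<in> rots xs. lex_le ys zs))"

definition asym_bracelets :: "nat \<Rightarrow> nat \<Rightarrow> nat list set" where
  "asym_bracelets k n = {xs. length xs = n \<and> set xs \<subseteq> {0..<k} \<and> is_bracelet xs
      \<and> is_necklace xs \<and> rev xs \<notin> rots xs}"

definition r_str :: "nat \<Rightarrow> nat \<Rightarrow> nat list" where
  "r_str n k = replicate (n - 2) 0 @ [k - 2, k - 1]"

definition last_nonmax_idx :: "nat \<Rightarrow> nat list \<Rightarrow> nat" where
  "last_nonmax_idx k xs = Max {i. i < length xs \<and> xs ! i \<noteq> k - 1}"

definition LastNonMax :: "nat \<Rightarrow> nat list \<Rightarrow> nat list" where
  "LastNonMax k xs = (let j = last_nonmax_idx k xs in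
     take j xs @ [xs ! j + 1] @ replicate (length xs - j - 1) (k - 1))"

definition LastSymbol :: "nat \<Rightarrow> nat list \<Rightarrow> nat list" where
  "LastSymbol k xs = necklace_of (butlast xs @ [(last xs + 1) mod k])"

definition FirstNonMin :: "nat list \<Rightarrow> nat list" where
  "FirstNonMin xs = (let i = Min {i. i < length xs \<and> xs ! i \<noteq> 0} in
     take i xs @ [xs ! i - 1] @ drop (i + 1) xs)"

definition SecondLastNonMax :: "nat \<Rightarrow> nat list \<Rightarrow> nat list" where
  "SecondLastNonMax k xs = (let l = Max ({i. i < length xs \<and> xs ! i \<noteq> k - 1}
        - {last_nonmax_idx k xs}) in xs[l := xs ! l + 1])"

end

theory Submission
  imports Defs
begin

lemma lex_less_iff:
  "length xs = length ys \<Longrightarrow>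
   lex_less xs ys \<longleftrightarrow> (\<exists>d<length xs. (\<forall>r<d. xs!r = ys!r) \<and> xs!d < ys!d)"
proof (induction xs arbitrary: ys)
  case Nil then show ?case by simp
next
  case (Cons x xs)
  then obtain y ys' where ys: "ys = y # ys'" by (cases ys) auto
  with Cons show ?case
    by (auto simp: Ex_less_Suc2 All_less_Suc2)
qed

lemma lex_lessI:
  "length xs = length ys \<Longrightarrow> d < length xs \<Longrightarrow> (\<And>r. r<d \<Longrightarrow> xs!r = ys!r) \<Longrightarrow> xs!d < ys!d
   \<Longrightarrow> lex_less xs ys"
  using lex_less_iff by blast

lemma lex_lessE:
  assumes "lex_less xs ys" "length xs = length ys"
  obtains d where "d < length xs" "\<And>r. r<d \<Longrightarrow> xs!r = ys!r" "xs!d < ys!d"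
proof -
  from assms obtain d where "d < length xs" "\<forall>r<d. xs!r = ys!r" "xs!d < ys!d"
    using lex_less_iff by blast
  then show ?thesis by (intro that) auto
qed

lemma lex_less_asym:
  assumes "lex_less xs ys" "length xs = length ys" shows "\<not> lex_less ys xs"
proof
  assume "lex_less ys xs"
  obtain d where d: "d < length xs" "\<And>r. r<d \<Longrightarrow> xs!r = ys!r" "xs!d < ys!d"
    using lex_lessE[OF assms] by metis
  obtain e where e: "e < length ys" "\<And>r. r<e \<Longrightarrow> ys!r = xs!r" "ys!e < xs!e"
    using lex_lessE[OF \<open>lex_less ys xs\<close> assms(2)[symmetric]] by metis
  show False
  proof (cases d e rule: linorder_cases)
    case less then show ?thesis using d e by (metis less_asym)
  next
    case equal then show ?thesis using d e by simp
  next
    case greater then show ?thesis using d e by (metis less_asym)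
  qed
qed

lemma lex_less_irrefl: "\<not> lex_less xs xs"
  using lex_less_asym by blast

lemma lex_le_antisym: "lex_le xs ys \<Longrightarrow> lex_le ys xs \<Longrightarrow> length xs = length ys \<Longrightarrow> xs = ys"
  unfolding lex_le_def using lex_less_asym by blast

lemma mod_small2: "p < n \<Longrightarrow> r < n \<Longrightarrow> (p + r) mod (n::nat) = (if p + r < n then p + r else p + r - n)"
  by (simp add: mod_if)

lemma nth_rot: "p < length xs \<Longrightarrow> r < length xs \<Longrightarrow>
  rotate p xs ! r = xs ! (if p + r < length xs then p + r else p + r - length xs)"
  by (simp add: nth_rotate mod_small2)

lemma nth_rotrev: "p < length xs \<Longrightarrow> r < length xs \<Longrightarrow>
  rotate p (rev xs) ! r = xs ! (length xs - 1 - (if p + r < length xs then p + r else p + r - length xs))"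
  by (simp add: nth_rot rev_nth)

lemma rotate_update:
  assumes "q < length xs" "p < length xs"
  shows "rotate p (xs[q := v]) = (rotate p xs)[(q + length xs - p) mod length xs := v]"
    and "rotate p xs ! ((q + length xs - p) mod length xs) = xs ! q"
proof -
  let ?n = "length xs"
  have key: "r < ?n \<Longrightarrow> ((if p + r < ?n then p + r else p + r - ?n) = q) = (r = (q + ?n - p) mod ?n)" for r
    using assms by (auto simp: mod_if)
  show "rotate p (xs[q := v]) = (rotate p xs)[(q + length xs - p) mod length xs := v]"
  proof (rule nth_equalityI)
    fix i assume "i < length (rotate p (xs[q := v]))"
    then have i: "i < ?n" by simp
    have "rotate p (xs[q := v]) ! i = xs[q:=v] ! (if p + i < ?n then p + i else p + i - ?n)"
      using assms i by (simp add: nth_rot)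
    also have "\<dots> = (if (q + ?n - p) mod ?n = i then v else xs ! (if p + i < ?n then p + i else p + i - ?n))"
      using key[OF i] assms i by (auto simp: nth_list_update)
    also have "\<dots> = (rotate p xs)[(q + length xs - p) mod length xs := v] ! i"
      using assms i by (simp add: nth_list_update nth_rot)
    finally show "rotate p (xs[q := v]) ! i = (rotate p xs)[(q + length xs - p) mod length xs := v] ! i" .
  qed simp
  have "(q + ?n - p) mod ?n < ?n" using assms by (intro mod_less_divisor) auto
  then show "rotate p xs ! ((q + length xs - p) mod length xs) = xs ! q"
    using key[of "(q + ?n - p) mod ?n"] assms by (simp add: nth_rot)
qed

lemma rots_rotate: "rots (rotate m xs) = rots xs"
proof -
  let ?n = "length xs"
  show ?thesis
  proof (cases "xs = []")
    case True then show ?thesis by simp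
  next
    case False
    then have n: "?n > 0" by simp
    have "rotate m xs = rotate (m mod ?n) xs" by (rule rotate_conv_mod)
    have 1: "rotate p (rotate m xs) \<in> rots xs" for p
    proof -
      have "rotate p (rotate m xs) = rotate ((p + m) mod ?n) xs"
        by (simp add: rotate_rotate rotate_conv_mod[of "p+m"])
      then show ?thesis unfolding rots_def using n by auto
    qed
    have 2: "rotate p xs \<in> rots (rotate m xs)" if "p < ?n" for p
    proof -
      let ?a = "(p + ?n - m mod ?n) mod ?n"
      have "rotate ?a (rotate m xs) = rotate (?a + m) xs" by (simp add: rotate_rotate)
      also have "\<dots> = rotate ((?a + m) mod ?n) xs" by (rule rotate_conv_mod)
      also have "(?a + m) mod ?n = (p + ?n - m mod ?n + m mod ?n) mod ?n"
        by (simp add: mod_add_left_eq mod_add_right_eq)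
      also have "\<dots> = p"
      proof -
        have "m mod ?n < ?n" using n by simp
        then have "p + ?n - m mod ?n + m mod ?n = p + ?n" by simp
        then show ?thesis using that by simp
      qed
      finally show ?thesis unfolding rots_def using n by (auto intro!: exI[of _ ?a])
    qed
    show ?thesis
    proof
      show "rots (rotate m xs) \<subseteq> rots xs" unfolding rots_def[of "rotate m xs"] using 1 by auto
      show "rots xs \<subseteq> rots (rotate m xs)" unfolding rots_def[of xs] using 2 by auto
    qed
  qed
qed

lemma necklace_of_eq:
  assumes "\<rho> = rotate m xs" "\<forall>z\<in>rots \<rho>. lex_le \<rho> z" "xs \<noteq> []"
  shows "necklace_of xs = \<rho>"
  unfolding necklace_of_def
proof (rule the_equality)
  have rr: "rots \<rho> = rots xs" using assms rots_rotate by simp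
  have "\<rho> \<in> rots \<rho>" unfolding rots_def using assms(1,3) by (auto intro!: exI[of _ 0])
  then show "\<rho> \<in> rots xs \<and> (\<forall>zs\<in>rots xs. lex_le \<rho> zs)" using rr assms by auto
  fix ys assume ys: "ys \<in> rots xs \<and> (\<forall>zs\<in>rots xs. lex_le ys zs)"
  then have "lex_le ys \<rho>" "lex_le \<rho> ys" using rr \<open>\<rho> \<in> rots \<rho>\<close> assms(2) by auto
  moreover have "length ys = length \<rho>" using ys assms(1) unfolding rots_def by auto
  ultimately show "ys = \<rho>" using lex_le_antisym by blast
qed

lemma rev_in_rots:
  assumes "rev ys = rotate p ys" "p < length ys"
  shows "\<exists>p'<length ys. ys = rotate p' (rev ys)"
proof -
  let ?n = "length ys"
  let ?a = "(?n - p) mod ?n"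
  have "rotate ?a (rev ys) = rotate (?a + p) ys" using assms by (simp add: rotate_rotate)
  also have "\<dots> = rotate ((?a + p) mod ?n) ys" by (rule rotate_conv_mod)
  also have "(?a + p) mod ?n = 0" using assms(2) by (simp add: mod_add_left_eq)
  moreover have "?a < ?n" using assms(2) by (intro mod_less_divisor) auto
  ultimately show ?thesis by (intro exI[of _ ?a]) auto
qed

lemma asym_char:
  "xs \<in> asym_bracelets k n \<longleftrightarrow> length xs = n \<and> (\<forall>r<n. xs!r < k) \<and>
     (\<forall>p<n. lex_le xs (rotate p xs)) \<and> (\<forall>p<n. lex_less xs (rotate p (rev xs)))"
proof -
  have set: "set xs \<subseteq> {0..<k} \<longleftrightarrow> (\<forall>r<length xs. xs!r < k)"
    unfolding subset_iff by (auto simp: in_set_conv_nth)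
  have neck: "is_necklace xs \<longleftrightarrow> (\<forall>p<length xs. lex_le xs (rotate p xs))"
    unfolding is_necklace_def rots_def by auto
  have brac: "is_bracelet xs \<longleftrightarrow> (\<forall>p<length xs. lex_le xs (rotate p xs)) \<and> (\<forall>p<length xs. lex_le xs (rotate p (rev xs)))"
    unfolding is_bracelet_def rots_def by auto
  have asy: "rev xs \<notin> rots xs \<longleftrightarrow> (\<forall>p<length xs. xs \<noteq> rotate p (rev xs))"
  proof
    assume h: "rev xs \<notin> rots xs"
    show "\<forall>p<length xs. xs \<noteq> rotate p (rev xs)"
    proof (intro allI impI notI)
      fix p assume "p < length xs" "xs = rotate p (rev xs)"
      then have "rev (rev xs) = rotate p (rev xs)" "p < length (rev xs)" by auto
      from rev_in_rots[OF this] obtain p' where "p' < length xs" "rev xs = rotate p' xs" by auto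
      then show False using h unfolding rots_def by auto
    qed
  next
    assume h: "\<forall>p<length xs. xs \<noteq> rotate p (rev xs)"
    show "rev xs \<notin> rots xs"
    proof
      assume "rev xs \<in> rots xs"
      then obtain p where "p < length xs" "rev xs = rotate p xs" unfolding rots_def by auto
      from rev_in_rots[OF this(2,1)] h show False by auto
    qed
  qed
  have ll: "lex_le a b \<and> a \<noteq> b \<longleftrightarrow> lex_less a b" for a b
    unfolding lex_le_def using lex_less_irrefl by auto
  have str: "(\<forall>p<length xs. lex_le xs (rotate p (rev xs))) \<and> (\<forall>p<length xs. xs \<noteq> rotate p (rev xs))
     \<longleftrightarrow> (\<forall>p<length xs. lex_less xs (rotate p (rev xs)))"
    using ll by blast
  show ?thesis
  proof
    assume "xs \<in> asym_bracelets k n"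
    then have h: "length xs = n" "set xs \<subseteq> {0..<k}" "is_bracelet xs" "rev xs \<notin> rots xs"
      unfolding asym_bracelets_def by auto
    show "length xs = n \<and> (\<forall>r<n. xs!r < k) \<and>
     (\<forall>p<n. lex_le xs (rotate p xs)) \<and> (\<forall>p<n. lex_less xs (rotate p (rev xs)))"
      using h(1) h(2)[unfolded set] h(3)[unfolded brac] h(4)[unfolded asy] str by blast
  next
    assume h: "length xs = n \<and> (\<forall>r<n. xs!r < k) \<and>
     (\<forall>p<n. lex_le xs (rotate p xs)) \<and> (\<forall>p<n. lex_less xs (rotate p (rev xs)))"
    then have "set xs \<subseteq> {0..<k}" "is_bracelet xs" "is_necklace xs" "rev xs \<notin> rots xs"
      using set brac neck asy str by auto
    then show "xs \<in> asym_bracelets k n" unfolding asym_bracelets_def using h by auto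
  qed
qed

lemma inc_lt:
  assumes "length x = length y" "lex_le y x" "\<pi> < q" "q < length y"
  shows "lex_less (y[q := y!q + 1]) (x[\<pi> := x!\<pi> + 1])"
proof (cases "y = x")
  case True
  show ?thesis
    by (rule lex_lessI[of _ _ \<pi>]) (use assms True in auto)
next
  case False
  with assms(2) have "lex_less y x" unfolding lex_le_def by auto
  then obtain d where d: "d < length y" "\<And>r. r<d \<Longrightarrow> y!r = x!r" "y!d < x!d"
    using lex_lessE assms(1) by metis
  show ?thesis
  proof (cases "d < \<pi>")
    case True
    show ?thesis by (rule lex_lessI[of _ _ d]) (use assms True d in auto)
  next
    case False
    have "y!\<pi> \<le> x!\<pi>" using d False by (cases "d = \<pi>") auto
    then show ?thesis by (intro lex_lessI[of _ _ \<pi>]) (use assms False d in auto)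
  qed
qed

lemma inc_same:
  assumes "length x = length y" "lex_less y x" "q < length y"
  shows "lex_less (y[q := y!q + 1]) (x[q := x!q + 1])"
proof -
  obtain d where d: "d < length y" "\<And>r. r<d \<Longrightarrow> y!r = x!r" "y!d < x!d"
    using lex_lessE assms(1,2) by metis
  show ?thesis by (rule lex_lessI[of _ _ d]) (use assms d in \<open>auto simp: nth_list_update\<close>)
qed

lemma dec_lt:
  assumes "length x = length y" "lex_le y x" "q < \<pi>" "\<pi> < length y" "0 < y!q"
  shows "lex_less (y[q := y!q - 1]) (x[\<pi> := x!\<pi> - 1])"
proof (cases "y = x")
  case True
  show ?thesis
    by (rule lex_lessI[of _ _ q]) (use assms True in auto)
next
  case False
  with assms(2) have "lex_less y x" unfolding lex_le_def by auto
  then obtain d where d: "d < length y" "\<And>r. r<d \<Longrightarrow> y!r = x!r" "y!d < x!d"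
    using lex_lessE assms(1) by metis
  show ?thesis
  proof (cases "d < q")
    case True
    show ?thesis by (rule lex_lessI[of _ _ d]) (use assms True d in auto)
  next
    case False
    have "y!q \<le> x!q" using d False by (cases "d = q") auto
    then show ?thesis by (intro lex_lessI[of _ _ q]) (use assms False d in auto)
  qed
qed

lemma dec_same:
  assumes "length x = length y" "lex_less y x" "q < length y" "0 < y!q"
  shows "lex_less (y[q := y!q - 1]) (x[q := x!q - 1])"
proof -
  obtain d where d: "d < length y" "\<And>r. r<d \<Longrightarrow> y!r = x!r" "y!d < x!d"
    using lex_lessE assms(1,2) by metis
  show ?thesis by (rule lex_lessI[of _ _ d]) (use assms d in \<open>auto simp: nth_list_update\<close>)
qed

lemma zero_prefix_less:
  assumes "length x = length y" "\<pi> < L" "L \<le> length y" "x!\<pi> \<noteq> 0" "\<And>r. r < L \<Longrightarrow> y!r = 0"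
  shows "lex_less y x"
proof -
  define d where "d = (LEAST r. x!r \<noteq> 0)"
  have d1: "x!d \<noteq> 0" unfolding d_def using assms(4) by (rule LeastI)
  have d2: "d \<le> \<pi>" unfolding d_def using assms(4) by (rule Least_le)
  have d3: "r < d \<Longrightarrow> x!r = 0" for r unfolding d_def using not_less_Least by blast
  show ?thesis
    by (rule lex_lessI[of _ _ d]) (use assms d1 d2 d3 in auto)
qed

lemma rot_rev_update:
  assumes "q < length xs" "p < length xs"
  shows "rotate p (rev (xs[q := v])) = (rotate p (rev xs))[(length xs - 1 - q + length xs - p) mod length xs := v]"
    and "rotate p (rev xs) ! ((length xs - 1 - q + length xs - p) mod length xs) = xs ! q"
proof -
  have r: "rev (xs[q := v]) = (rev xs)[length xs - 1 - q := v]" using assms by (simp add: rev_update)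
  show "rotate p (rev (xs[q := v])) = (rotate p (rev xs))[(length xs - 1 - q + length xs - p) mod length xs := v]"
    using rotate_update(1)[of "length xs - 1 - q" "rev xs" p v] assms r by simp
  show "rotate p (rev xs) ! ((length xs - 1 - q + length xs - p) mod length xs) = xs ! q"
    using rotate_update(2)[of "length xs - 1 - q" "rev xs" p] assms by (simp add: rev_nth)
qed

lemma inc_gen:
  assumes "length x = length y" "q < length y" "\<pi> < length y" "x!\<pi> = y!q"
    "lex_le y x" "\<pi> < q \<or> (\<pi> = q \<and> lex_less y x)"
  shows "lex_less (y[q := y!q+1]) (x[\<pi> := y!q+1])"
  using assms inc_lt[of x y \<pi> q] inc_same[of x y q] by auto

lemma dec_gen:
  assumes "length x = length y" "q < length y" "\<pi> < length y" "x!\<pi> = y!q" "0 < y!q"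
    "lex_le y x" "q < \<pi> \<or> (\<pi> = q \<and> lex_less y x)"
  shows "lex_less (y[q := y!q-1]) (x[\<pi> := y!q-1])"
  using assms dec_lt[of x y q \<pi>] dec_same[of x y q] by auto

lemma le_of_less: "lex_less a b \<Longrightarrow> lex_le a b" unfolding lex_le_def by simp

lemma mod_eq_helper: "x = n + m \<Longrightarrow> m < n \<Longrightarrow> x mod n = (m::nat)" by simp

lemma inc_last:
  assumes A: "a \<in> asym_bracelets k n" and n: "n \<ge> 2" and lt: "a!(n-1) + 1 < k"
  shows "a[n-1 := a!(n-1)+1] \<in> asym_bracelets k n"
proof -
  note ch = A[unfolded asym_char]
  have len: "length a = n" using ch by simp
  let ?q = "n - 1"
  let ?v = "a!?q + 1"
  let ?b = "a[?q := ?v]"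
  have q: "?q < length a" using len n by simp
  have sym: "\<forall>r<n. ?b!r < k" using ch lt by (auto simp: nth_list_update)
  have rot: "lex_le ?b (rotate p ?b)" if p: "p < n" for p
  proof (cases "p = 0")
    case True then show ?thesis by (simp add: lex_le_def)
  next
    case False
    let ?\<pi> = "(?q + length a - p) mod length a"
    have pi: "?\<pi> = n - 1 - p" using False p len n by (simp add: mod_if)
    have "lex_less ?b ((rotate p a)[?\<pi> := ?v])"
      by (rule inc_gen) (use ch len p n pi False rotate_update(2)[OF q, of p] in auto)
    then show ?thesis using rotate_update(1)[OF q, of p] p len by (simp add: le_of_less)
  qed
  have rev: "lex_less ?b (rotate p (rev ?b))" if p: "p < n" for p
  proof -
    let ?\<pi> = "(length a - 1 - ?q + length a - p) mod length a"
    have "lex_less ?b ((rotate p (rev a))[?\<pi> := ?v])"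
    proof (rule inc_gen)
      show "lex_le a (rotate p (rev a))" using ch p by (simp add: le_of_less)
      have sp: "lex_less a (rotate p (rev a))" using ch p by simp
      show "?\<pi> < ?q \<or> (?\<pi> = ?q \<and> lex_less a (rotate p (rev a)))"
        using sp p len n by (cases "p = 1") (auto simp: mod_if)
    qed (use ch len p n rot_rev_update(2)[OF q, of p] in auto)
    then show ?thesis using rot_rev_update(1)[OF q, of p] p len by simp
  qed
  show ?thesis unfolding asym_char using len sym rot rev by simp
qed

lemma first_le:
  assumes "lex_le a z" "length a = length z" "0 < length a" shows "a!0 \<le> z!0"
proof (cases "a = z")
  case False
  then have "lex_less a z" using assms unfolding lex_le_def by simp
  then obtain d where d: "d < length a" "\<And>r. r<d \<Longrightarrow> a!r = z!r" "a!d < z!d"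
    using lex_lessE assms by metis
  then show ?thesis by (cases "d = 0") auto
qed simp

lemma inc_2nd:
  assumes A: "a \<in> asym_bracelets k n" and n: "n \<ge> 3" and last: "a!(n-1) = k - 1"
    and lt: "a!(n-2) + 1 < k"
    and H: "\<not> (a!(n-2) + 1 = k - 1 \<and> (\<forall>r\<le>n-3. a!r = a!(n-3-r)))"
  shows "a[n-2 := a!(n-2)+1] \<in> asym_bracelets k n"
proof -
  note ch = A[unfolded asym_char]
  have len: "length a = n" using ch by simp
  let ?q = "n - 2"
  let ?v = "a!?q + 1"
  let ?b = "a[?q := ?v]"
  have q: "?q < length a" using len n by simp
  have sym: "\<forall>r<n. ?b!r < k" using ch lt by (auto simp: nth_list_update)
  have a0: "a!0 \<le> a!?q"
  proof -
    have "lex_le a (rotate ?q a)" using ch n by simp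
    from first_le[OF this] have "a!0 \<le> rotate ?q a ! 0" using len n by simp
    then show ?thesis using len n by (simp add: nth_rot)
  qed
  have rot: "lex_le ?b (rotate p ?b)" if p: "p < n" for p
  proof -
    consider "p = 0" | "p \<ge> 1 \<and> p \<le> n - 2" | "p = n - 1" using p by linarith
    then show ?thesis
    proof cases
      case 1 then show ?thesis by (simp add: lex_le_def)
    next
      case 2
      let ?\<pi> = "(?q + length a - p) mod length a"
      have pi: "?\<pi> = n - 2 - p" unfolding len by (rule mod_eq_helper) (use 2 p n in linarith)+
      have "lex_less ?b ((rotate p a)[?\<pi> := ?v])"
        by (rule inc_gen) (use ch len p n pi 2 rotate_update(2)[OF q, of p] in auto)
      then show ?thesis using rotate_update(1)[OF q, of p] p len by (simp add: le_of_less)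
    next
      case 3
      have "lex_less ?b (rotate p ?b)"
      proof (rule lex_lessI[of _ _ 0])
        have "rotate p ?b ! 0 = ?b ! (n-1)" using 3 len n by (simp add: nth_rot)
        also have "\<dots> = k - 1" using last n len by (simp add: nth_list_update)
        finally show "?b ! 0 < rotate p ?b ! 0" using a0 lt n len by (simp add: nth_list_update)
      qed (use len n in auto)
      then show ?thesis by (simp add: le_of_less)
    qed
  qed
  have rev: "lex_less ?b (rotate p (rev ?b))" if p: "p < n" for p
  proof (cases "p = 2")
    case False
    let ?\<pi> = "(length a - 1 - ?q + length a - p) mod length a"
    have sp: "lex_less a (rotate p (rev a))" using ch p by simp
    have "lex_less ?b ((rotate p (rev a))[?\<pi> := ?v])"
    proof (rule inc_gen)
      show "lex_le a (rotate p (rev a))" using sp by (simp add: le_of_less)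
      show "?\<pi> < ?q \<or> (?\<pi> = ?q \<and> lex_less a (rotate p (rev a)))"
        using sp p len n False by (auto simp: mod_if)
    qed (use ch len p n rot_rev_update(2)[OF q, of p] in auto)
    then show ?thesis using rot_rev_update(1)[OF q, of p] p len by simp
  next
    case True
    let ?za = "rotate 2 (rev a)"
    have lza: "length ?za = n" using len by simp
    have za1: "?za ! r = a!(n-3-r)" if "r \<le> n - 3" for r
    proof -
      have "?za ! r = a ! (length a - 1 - (if 2 + r < length a then 2 + r else 2 + r - length a))"
        using that len n by (intro nth_rotrev) auto
      moreover have "2 + r < length a" using that len n by linarith
      moreover have "length a - 1 - (2 + r) = n - 3 - r" using len by linarith
      ultimately show ?thesis by simp
    qed
    have za2: "?za ! (n-2) = a!(n-1)" using len n by (simp add: nth_rotrev)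
    have zb: "rotate 2 (rev ?b) = ?za[n-1 := ?v]"
    proof -
      have "(length a - 1 - ?q + length a - 2) mod length a = n - 1" using len n by (simp add: mod_if)
      then show ?thesis using rot_rev_update(1)[OF q, of 2] len n by simp
    qed
    have "lex_less a ?za" using ch n by simp
    then obtain d where d: "d < n" "\<And>r. r<d \<Longrightarrow> a!r = ?za!r" "a!d < ?za!d"
      using lex_lessE len lza by metis
    have "lex_less ?b (?za[n-1 := ?v])"
    proof (cases "d \<le> n - 3")
      case True
      show ?thesis by (rule lex_lessI[of _ _ d]) (use True d len n in \<open>auto simp: nth_list_update\<close>)
    next
      case False
      have pal: "\<forall>r\<le>n-3. a!r = a!(n-3-r)" using d(2) za1 False by force
      with H have "a!(n-2) + 1 \<noteq> k - 1" by blast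
      with lt have lt2: "a!(n-2) + 1 < k - 1" by simp
      show ?thesis
      proof (rule lex_lessI[of _ _ "n-2"])
        fix r assume "r < n - 2"
        then show "?b ! r = ?za[n-1 := ?v] ! r" using d(2)[of r] False len n by (simp add: nth_list_update)
      next
        show "?b ! (n-2) < ?za[n-1 := ?v] ! (n-2)" using lt2 za2 last len n by (simp add: nth_list_update)
      qed (use len n in auto)
    qed
    then show ?thesis using zb True by simp
  qed
  show ?thesis unfolding asym_char using len sym rot rev by simp
qed

lemma dec_first:
  assumes A: "a \<in> asym_bracelets k n" and i: "i < n" "a!i \<noteq> 0" "\<forall>r<i. a!r = 0"
    and c: "i = 0 \<or> a!i \<ge> 2"
  shows "a[i := a!i - 1] \<in> asym_bracelets k n"
proof -
  note ch = A[unfolded asym_char]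
  have len: "length a = n" using ch by simp
  let ?v = "a!i - 1"
  let ?b = "a[i := ?v]"
  have q: "i < length a" using len i by simp
  have sym: "\<forall>r<n. ?b!r < k"
  proof (intro allI impI)
    fix r assume r: "r < n"
    have "a!i < k" "a!r < k" using ch i r by auto
    then show "?b!r < k" using r len by (cases "r = i") auto
  qed
  have b0: "\<And>r. r < i \<Longrightarrow> ?b!r = 0" using i by simp
  have risky: "lex_less ?b (x[\<pi> := ?v])" if "\<pi> < i" "length x = n" for x \<pi>
  proof (rule zero_prefix_less[of "x[\<pi> := ?v]" ?b \<pi> i])
    show "x[\<pi> := ?v] ! \<pi> \<noteq> 0" using that c i by auto
  qed (use that len i b0 in auto)
  have rot: "lex_le ?b (rotate p ?b)" if p: "p < n" for p
  proof (cases "p = 0")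
    case True then show ?thesis by (simp add: lex_le_def)
  next
    case False
    let ?\<pi> = "(i + length a - p) mod length a"
    have pin: "?\<pi> \<noteq> i" using False p len i by (auto simp: mod_if)
    have "lex_less ?b ((rotate p a)[?\<pi> := ?v])"
    proof (cases "?\<pi> < i")
      case True then show ?thesis using risky len by simp
    next
      case False
      then have "i < ?\<pi>" using pin by simp
      then show ?thesis
        by (intro dec_gen) (use ch len p i rotate_update(2)[OF q, of p] in auto)
    qed
    then show ?thesis using rotate_update(1)[OF q, of p] p len by (simp add: le_of_less)
  qed
  have rev: "lex_less ?b (rotate p (rev ?b))" if p: "p < n" for p
  proof -
    let ?\<pi> = "(length a - 1 - i + length a - p) mod length a"
    have sp: "lex_less a (rotate p (rev a))" using ch p by simp
    have "lex_less ?b ((rotate p (rev a))[?\<pi> := ?v])"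
    proof (cases "?\<pi> < i")
      case True then show ?thesis using risky len by simp
    next
      case False
      show ?thesis
      proof (rule dec_gen)
        show "lex_le a (rotate p (rev a))" using sp by (simp add: le_of_less)
        show "i < ?\<pi> \<or> (?\<pi> = i \<and> lex_less a (rotate p (rev a)))" using False sp by auto
      qed (use ch len p i rot_rev_update(2)[OF q, of p] in auto)
    qed
    then show ?thesis using rot_rev_update(1)[OF q, of p] p len by simp
  qed
  show ?thesis unfolding asym_char using len sym rot rev by simp
qed



lemma le_less_contra: "lex_le a z \<Longrightarrow> lex_less z a \<Longrightarrow> length a = length z \<Longrightarrow> False"
  unfolding lex_le_def using lex_less_asym lex_less_irrefl by metis

lemma ls_good:
  assumes A: "a \<in> asym_bracelets k n" and n: "n \<ge> 3" and k: "k \<ge> 3"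
    and last: "a!(n-1) = k - 1"
    and i: "i < n" "i \<ge> 1" "a!i = 1" "\<forall>r<i. a!r = 0"
    and a2: "a!(n-2) \<ge> 2"
  shows "LastSymbol k a \<in> asym_bracelets k n"
proof -
  note ch = A[unfolded asym_char]
  have len: "length a = n" using ch by simp
  define \<rho> where "\<rho> = 0 # butlast a"
  have lr: "length \<rho> = n" unfolding \<rho>_def using len n by simp
  have r0: "\<rho>!0 = 0" unfolding \<rho>_def by simp
  have rS: "\<rho>!(Suc r) = a!r" if "r < n - 1" for r
    unfolding \<rho>_def using that len by (simp add: nth_butlast)
  have in3: "i + 1 < n - 1"
  proof -
    have "i \<noteq> n - 1" using i last k by auto
    moreover have "i \<noteq> n - 2" using i a2 by auto
    ultimately show ?thesis using i by linarith
  qed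
  have rz: "\<rho>!r = 0" if "r \<le> i" for r
  proof (cases r)
    case 0 then show ?thesis using r0 by simp
  next
    case (Suc r') then show ?thesis using rS[of r'] i that in3 by auto
  qed
  have ri: "\<rho>!(i+1) = 1" using rS[of i] i in3 by simp
  have rl: "\<rho>!(n-1) = a!(n-2)"
  proof -
    have "Suc (n-2) = n-1" "n - 2 < n - 1" using n by linarith+
    then show ?thesis using rS[of "n-2"] by simp
  qed
  have rl0: "\<rho>!(n-1) \<noteq> 0" using rl a2 by simp
  have win: "m = 0" if m: "m + i \<le> n - 1" "\<forall>s\<le>i. \<rho>!(m+s) = 0" for m
  proof (rule ccontr)
    assume "m \<noteq> 0"
    then obtain m' where m': "m = Suc m'" by (cases m) auto
    have z: "a!(m'+s) = 0" if "s \<le> i" for s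
      using m(2)[rule_format, of s] rS[of "m'+s"] that m m' by simp
    let ?z = "rotate m' a"
    have "lex_le a ?z" using ch m m' n by simp
    moreover have "lex_less ?z a"
    proof (rule lex_lessI[of _ _ i])
      have zs: "?z ! s = a!(m'+s)" if "s \<le> i" for s
      proof -
        have "m' + s < n" using that m m' by linarith
        then show ?thesis using that m m' len n by (simp add: nth_rot)
      qed
      show "?z ! r = a ! r" if "r < i" for r
      proof -
        have r: "r \<le> i" using that by simp
        have "?z ! r = 0" using zs[OF r] z[OF r] by simp
        moreover have "a ! r = 0" using i(4) that by blast
        ultimately show ?thesis by simp
      qed
      have "?z ! i = 0" using zs[of i] z[of i] by simp
      then show "?z ! i < a ! i" using i(3) by simp
    qed (use len i in auto)
    moreover have "length a = length ?z" by simp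
    ultimately show False by (rule le_less_contra)
  qed
  have rot: "lex_le \<rho> (rotate p \<rho>)" if p: "p < n" for p
  proof (cases "\<exists>r\<le>i. rotate p \<rho> ! r \<noteq> 0")
    case True
    then obtain r where r: "r \<le> i" "rotate p \<rho> ! r \<noteq> 0" by auto
    have "lex_less \<rho> (rotate p \<rho>)"
      by (rule zero_prefix_less[of _ _ r "i+1"]) (use r rz lr in3 in auto)
    then show ?thesis by (simp add: le_of_less)
  next
    case False
    then have zz: "\<And>r. r \<le> i \<Longrightarrow> rotate p \<rho> ! r = 0" by auto
    show ?thesis
    proof (cases "p + i \<le> n - 1")
      case True
      have "\<forall>s\<le>i. \<rho>!(p+s) = 0"
      proof (intro allI impI)
        fix s assume s: "s \<le> i"
        then have "p + s < n" using True in3 by linarith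
        then show "\<rho>!(p+s) = 0" using zz[OF s] lr p by (simp add: nth_rot)
      qed
      then have "p = 0" using win True by blast
      then show ?thesis by (simp add: lex_le_def)
    next
      case False
      have "rotate p \<rho> ! (n-1-p) = \<rho>!(n-1)" using lr p by (simp add: nth_rot)
      then show ?thesis using zz[of "n-1-p"] False rl0 by simp
    qed
  qed
  have rev: "lex_less \<rho> (rotate p (rev \<rho>))" if p: "p < n" for p
  proof (cases "\<exists>r\<le>i. rotate p (rev \<rho>) ! r \<noteq> 0")
    case True
    then obtain r where r: "r \<le> i" "rotate p (rev \<rho>) ! r \<noteq> 0" by auto
    show ?thesis
      by (rule zero_prefix_less[of _ _ r "i+1"]) (use r rz lr in3 in auto)
  next
    case False
    then have zz: "\<And>r. r \<le> i \<Longrightarrow> rotate p (rev \<rho>) ! r = 0" by auto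
    show ?thesis
    proof (cases "p + i \<le> n - 1")
      case True
      let ?m = "n - 1 - p - i"
      have "\<forall>s\<le>i. \<rho>!(?m+s) = 0"
      proof (intro allI impI)
        fix s assume s: "s \<le> i"
        have "rotate p (rev \<rho>) ! (i - s) = \<rho>!(n - 1 - (p + (i - s)))"
          using s True lr p in3 by (simp add: nth_rotrev)
        moreover have "n - 1 - (p + (i - s)) = ?m + s" using s True by linarith
        moreover have "rotate p (rev \<rho>) ! (i - s) = 0" using zz[of "i-s"] by simp
        ultimately show "\<rho>!(?m+s) = 0" by metis
      qed
      then have m0: "?m = 0" using win[of ?m] True by auto
      show ?thesis
      proof (rule lex_lessI[of _ _ "i+1"])
        show "\<And>r. r < i + 1 \<Longrightarrow> \<rho> ! r = rotate p (rev \<rho>) ! r" using zz rz by simp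
        have "p + (i + 1) = n" using m0 True in3 by linarith
        then have "rotate p (rev \<rho>) ! (i+1) = \<rho>!(n-1)" using lr p in3 by (simp add: nth_rotrev)
        then show "\<rho> ! (i+1) < rotate p (rev \<rho>) ! (i+1)" using rl a2 ri by simp
      qed (use lr in3 in auto)
    next
      case False
      have np: "n - p < n" "p + (n - p) = n" using p False in3 by linarith+
      have "rotate p (rev \<rho>) ! (n-p) = \<rho>!(length \<rho> - 1 - (if p + (n-p) < length \<rho> then p + (n-p) else p + (n-p) - length \<rho>))"
        using lr p np by (intro nth_rotrev) auto
      then have "rotate p (rev \<rho>) ! (n-p) = \<rho>!(n-1)" using np lr by simp
      then show ?thesis using zz[of "n-p"] False rl0 by simp
    qed
  qed
  have sym: "\<forall>r<n. \<rho>!r < k"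
  proof (intro allI impI)
    fix r assume r: "r < n"
    show "\<rho>!r < k"
    proof (cases r)
      case 0 then show ?thesis using r0 k by simp
    next
      case (Suc r') then show ?thesis using rS[of r'] ch r by auto
    qed
  qed
  have good: "\<rho> \<in> asym_bracelets k n" unfolding asym_char using lr sym rot rev by simp
  have sig: "butlast a @ [(last a + 1) mod k] = butlast a @ [0]"
  proof -
    have "a \<noteq> []" using len n by auto
    then have "last a = k - 1" using last len n by (simp add: last_conv_nth)
    then show ?thesis using k by simp
  qed
  have rr: "\<rho> = rotate (n - 1) (butlast a @ [0])"
    unfolding \<rho>_def using rotate_append[of "butlast a" "[0]"] len by simp
  have "necklace_of (butlast a @ [0]) = \<rho>"
  proof (rule necklace_of_eq[OF rr])
    show "\<forall>z\<in>rots \<rho>. lex_le \<rho> z" unfolding rots_def using rot lr by auto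
  qed simp
  then show ?thesis unfolding LastSymbol_def sig using good by simp
qed

lemma slnm_good:
  assumes A: "a \<in> asym_bracelets 3 n" and n: "n \<ge> 5" and l1: "a!(n-1) = 2" and l2: "a!(n-2) = 1"
    and pal: "\<forall>r\<le>n-3. a!r = a!(n-3-r)" and a0: "a!0 = 0" and a1: "a!1 \<noteq> 2"
  shows "a[n-3 := a!(n-3) + 1] \<in> asym_bracelets 3 n"
proof -
  note ch = A[unfolded asym_char]
  have len: "length a = n" using ch by simp
  let ?q = "n - 3"
  have aq: "a!?q = 0" using pal a0 n by (metis diff_self_eq_0 le_refl)
  let ?v = "a!?q + 1"
  let ?b = "a[?q := ?v]"
  have q: "?q < length a" using len n by simp
  have sym: "\<forall>r<n. ?b!r < 3" using ch aq by (auto simp: nth_list_update)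
  have rot: "lex_le ?b (rotate p ?b)" if p: "p < n" for p
  proof -
    consider "p = 0" | "p \<ge> 1 \<and> p \<le> n - 3" | "p = n - 2 \<or> p = n - 1" using p by linarith
    then show ?thesis
    proof cases
      case 1 then show ?thesis by (simp add: lex_le_def)
    next
      case 2
      let ?\<pi> = "(?q + length a - p) mod length a"
      have pi: "?\<pi> = n - 3 - p" unfolding len by (rule mod_eq_helper) (use 2 p n in linarith)+
      have "lex_less ?b ((rotate p a)[?\<pi> := ?v])"
        by (rule inc_gen) (use ch len p n pi 2 rotate_update(2)[OF q, of p] in auto)
      then show ?thesis using rotate_update(1)[OF q, of p] p len by (simp add: le_of_less)
    next
      case 3
      have "lex_less ?b (rotate p ?b)"
      proof (rule lex_lessI[of _ _ 0])
        have "rotate p ?b ! 0 = ?b ! p" using 3 p len n by (simp add: nth_rot)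
        also have "\<dots> = a ! p" using 3 n len by (auto simp: nth_list_update)
        finally show "?b ! 0 < rotate p ?b ! 0" using 3 l1 l2 a0 n len by (auto simp: nth_list_update)
      qed (use len n in auto)
      then show ?thesis by (simp add: le_of_less)
    qed
  qed
  have rev: "lex_less ?b (rotate p (rev ?b))" if p: "p < n" for p
  proof -
    consider "p \<noteq> 3 \<and> p \<noteq> 4" | "p = 3" | "p = 4" by blast
    then show ?thesis
    proof cases
      case 1
      let ?\<pi> = "(length a - 1 - ?q + length a - p) mod length a"
      have sp: "lex_less a (rotate p (rev a))" using ch p by simp
      have "lex_less ?b ((rotate p (rev a))[?\<pi> := ?v])"
      proof (rule inc_gen)
        show "lex_le a (rotate p (rev a))" using sp by (simp add: le_of_less)
        show "?\<pi> < ?q \<or> (?\<pi> = ?q \<and> lex_less a (rotate p (rev a)))"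
          using sp p len n 1 by (auto simp: mod_if)
      qed (use ch len p n rot_rev_update(2)[OF q, of p] in auto)
      then show ?thesis using rot_rev_update(1)[OF q, of p] p len by simp
    next
      case 2
      let ?za = "rotate 3 (rev a)"
      have lza: "length ?za = n" using len by simp
      have za2: "?za ! (n-3) = a!(n-1)"
      proof -
        have "?za ! (n-3) = a ! (length a - 1 - (if 3 + (n-3) < length a then 3 + (n-3) else 3 + (n-3) - length a))"
          using len n by (intro nth_rotrev) auto
        then show ?thesis using len n by simp
      qed
      have zb: "rotate 3 (rev ?b) = ?za[n-1 := ?v]"
      proof -
        have "(length a - 1 - ?q + length a - 3) mod length a = n - 1" using len n by (simp add: mod_if)
        then show ?thesis using rot_rev_update(1)[OF q, of 3] len n by simp
      qed
      have "lex_less a ?za" using ch n by simp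
      then obtain d where d: "d < n" "\<And>r. r<d \<Longrightarrow> a!r = ?za!r" "a!d < ?za!d"
        using lex_lessE len lza by metis
      have "lex_less ?b (?za[n-1 := ?v])"
      proof (cases "d \<le> n - 4")
        case True
        show ?thesis by (rule lex_lessI[of _ _ d]) (use True d len n in \<open>auto simp: nth_list_update\<close>)
      next
        case False
        show ?thesis
        proof (rule lex_lessI[of _ _ "n-3"])
          fix r assume "r < n - 3"
          then show "?b ! r = ?za[n-1 := ?v] ! r" using d(2)[of r] False len n by (simp add: nth_list_update)
        next
          show "?b ! (n-3) < ?za[n-1 := ?v] ! (n-3)" using za2 l1 aq len n by (simp add: nth_list_update)
        qed (use len n in auto)
      qed
      then show ?thesis using zb 2 by simp
    next
      case 3
      let ?za = "rotate 4 (rev a)"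
      have lza: "length ?za = n" using len by simp
      have za1: "?za ! r = a!(r+2)" if "r \<le> n - 5" for r
      proof -
        have "?za ! r = a ! (length a - 1 - (if 4 + r < length a then 4 + r else 4 + r - length a))"
          using that len n by (intro nth_rotrev) auto
        moreover have "4 + r < length a" using that len n by linarith
        moreover have "length a - 1 - (4 + r) = n - 3 - (r + 2)" using len that n by linarith
        moreover have "a!(n - 3 - (r+2)) = a!(r+2)"
        proof -
          have h: "r + 2 \<le> n - 3" using that n by linarith
          from pal h have "a!(r+2) = a!(n-3-(r+2))" by blast
          then show ?thesis by (rule HOL.sym)
        qed
        ultimately show ?thesis by simp
      qed
      have za2: "?za ! (n-4) = a!(n-1)"
      proof -
        have "?za ! (n-4) = a ! (length a - 1 - (if 4 + (n-4) < length a then 4 + (n-4) else 4 + (n-4) - length a))"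
          using len n by (intro nth_rotrev) auto
        then show ?thesis using len n by simp
      qed
      have zb: "rotate 4 (rev ?b) = ?za[n-2 := ?v]"
      proof -
        have "(length a - 1 - ?q + length a - 4) mod length a = n - 2" using len n by (simp add: mod_if)
        then show ?thesis using rot_rev_update(1)[OF q, of 4] len n by simp
      qed
      have r2: "rotate 2 a ! r = a!(r+2)" if "r \<le> n - 3" for r
      proof -
        have "2 + r < n" using that n by linarith
        then show ?thesis using that len n by (simp add: nth_rot add.commute)
      qed
      have "lex_le a (rotate 2 a)" using ch n by simp
      then consider "\<forall>r\<le>n-5. a!r = a!(r+2)"
        | d where "d \<le> n - 5" "\<forall>r<d. a!r = a!(r+2)" "a!d < a!(d+2)"
      proof -
        assume c1: "\<forall>r\<le>n-5. a!r = a!(r+2) \<Longrightarrow> thesis"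
        assume c2: "\<And>d. d \<le> n - 5 \<Longrightarrow> \<forall>r<d. a!r = a!(r+2) \<Longrightarrow> a!d < a!(d+2) \<Longrightarrow> thesis"
        assume le: "lex_le a (rotate 2 a)"
        show thesis
        proof (cases "a = rotate 2 a")
          case True
          have "\<forall>r\<le>n-5. a!r = a!(r+2)"
          proof (intro allI impI)
            fix r assume "r \<le> n - 5"
            then have "r \<le> n - 3" by linarith
            then have "rotate 2 a ! r = a!(r+2)" by (rule r2)
            then show "a!r = a!(r+2)" using True by simp
          qed
          then show thesis by (rule c1)
        next
          case False
          then have "lex_less a (rotate 2 a)" using le unfolding lex_le_def by simp
          then obtain d where d: "d < n" "\<And>r. r<d \<Longrightarrow> a!r = rotate 2 a!r" "a!d < rotate 2 a!d"
            using lex_lessE len by (metis length_rotate)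
          show thesis
          proof (cases "d \<le> n - 5")
            case True
            have "\<forall>r<d. a!r = a!(r+2)" using d(2) r2 True by auto
            moreover have "a!d < a!(d+2)" using d(3) r2[of d] True by auto
            ultimately show thesis using c2 True by blast
          next
            case False
            have "\<forall>r\<le>n-5. a!r = a!(r+2)" using d(2) r2 False by auto
            then show thesis by (rule c1)
          qed
        qed
      qed
      then have "lex_less ?b (?za[n-2 := ?v])"
      proof cases
        case 1
        show ?thesis
        proof (rule lex_lessI[of _ _ "n-4"])
          fix r assume r: "r < n - 4"
          then have "?b ! r = a!r" using n by (simp add: nth_list_update)
          also have "\<dots> = a!(r+2)" using 1 r by auto
          also have "\<dots> = ?za ! r" using za1[of r] r by simp
          also have "\<dots> = ?za[n-2 := ?v] ! r" using r by (simp add: nth_list_update)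
          finally show "?b ! r = ?za[n-2 := ?v] ! r" .
        next
          have h1: "1 \<le> n - 3" "n - 3 - 1 = n - 4" using n by linarith+
          from pal h1(1) have "a!1 = a!(n-3-1)" by blast
          then have e: "a!(n-4) = a!1" using h1(2) by simp
          have "a!1 < 3" using ch n by auto
          then have "a!1 < 2" using a1 by linarith
          then have "a!(n-4) < 2" using e by simp
          then show "?b ! (n-4) < ?za[n-2 := ?v] ! (n-4)" using za2 l1 len n by (simp add: nth_list_update)
        qed (use len n in auto)
      next
        case (2 d)
        show ?thesis
        proof (rule lex_lessI[of _ _ d])
          fix r assume r: "r < d"
          then show "?b ! r = ?za[n-2 := ?v] ! r" using 2 za1[of r] n by (simp add: nth_list_update)
        next
          show "?b ! d < ?za[n-2 := ?v] ! d" using 2 za1[of d] n by (simp add: nth_list_update)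
        qed (use len n 2 in auto)
      qed
      then show ?thesis using zb 3 by simp
    qed
  qed
  show ?thesis unfolding asym_char using len sym rot rev by simp
qed

lemma lnm_idx1:
  assumes "length a = n" "n \<ge> 1" "a!(n-1) \<noteq> k - 1"
  shows "last_nonmax_idx k a = n - 1"
  unfolding last_nonmax_idx_def using assms by (intro Max_eqI) auto

lemma lnm_idx2:
  assumes "length a = n" "n \<ge> 2" "a!(n-1) = k - 1" "a!(n-2) \<noteq> k - 1"
  shows "last_nonmax_idx k a = n - 2"
  unfolding last_nonmax_idx_def
proof (rule Max_eqI)
  fix y assume "y \<in> {i. i < length a \<and> a ! i \<noteq> k - 1}"
  then show "y \<le> n - 2" using assms by (cases "y = n - 1") auto
qed (use assms in auto)

lemma lnm1:
  assumes "length a = n" "n \<ge> 1" "a!(n-1) \<noteq> k - 1"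
  shows "LastNonMax k a = a[n-1 := a!(n-1) + 1]"
proof -
  have "a[n-1 := a!(n-1) + 1] = take (n-1) a @ (a!(n-1)+1) # drop (Suc (n-1)) a"
    using assms by (intro upd_conv_take_nth_drop) auto
  then show ?thesis unfolding LastNonMax_def Let_def lnm_idx1[OF assms] using assms by simp
qed

lemma lnm2:
  assumes "length a = n" "n \<ge> 2" "a!(n-1) = k - 1" "a!(n-2) \<noteq> k - 1"
  shows "LastNonMax k a = a[n-2 := a!(n-2) + 1]"
proof -
  have "a[n-2 := a!(n-2) + 1] = take (n-2) a @ (a!(n-2)+1) # drop (Suc (n-2)) a"
    using assms by (intro upd_conv_take_nth_drop) auto
  moreover have "drop (Suc (n-2)) a = [k - 1]"
  proof -
    have "Suc (n-2) = n - 1" using assms by linarith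
    moreover have "drop (n-1) a = a!(n-1) # drop (Suc (n-1)) a" using assms by (intro Cons_nth_drop_Suc[symmetric]) auto
    ultimately show ?thesis using assms by simp
  qed
  moreover have "n - (n - 2) - 1 = 1" using assms by linarith
  ultimately show ?thesis unfolding LastNonMax_def Let_def lnm_idx2[OF assms] using assms by simp
qed

lemma fnm:
  assumes "length a = n" "i = Min {i. i < length a \<and> a ! i \<noteq> 0}" "i < n"
  shows "FirstNonMin a = a[i := a!i - 1]"
proof -
  have "a[i := a!i - 1] = take i a @ (a!i - 1) # drop (Suc i) a"
    using assms by (intro upd_conv_take_nth_drop) auto
  then show ?thesis unfolding FirstNonMin_def Let_def using assms by simp
qed

lemma slnm:
  assumes "length a = n" "n \<ge> 3" "a!(n-1) = 2" "a!(n-2) = 1" "a!(n-3) = 0"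
  shows "SecondLastNonMax 3 a = a[n-3 := a!(n-3) + 1]"
proof -
  have i2: "last_nonmax_idx 3 a = n - 2" using lnm_idx2[of a n 3] assms by simp
  have "Max ({i. i < length a \<and> a ! i \<noteq> 3 - 1} - {n - 2}) = n - 3"
  proof (rule Max_eqI)
    fix y assume "y \<in> {i. i < length a \<and> a ! i \<noteq> 3 - 1} - {n - 2}"
    then show "y \<le> n - 3" using assms by (cases "y = n - 1") auto
  qed (use assms in auto)
  then show ?thesis unfolding SecondLastNonMax_def Let_def i2 by simp
qed

theorem mainTheorem8:
  fixes n k :: nat and \<alpha> :: "nat list"
  assumes nk: "(n \<ge> 3 \<and> k \<ge> 4) \<or> (n \<ge> 4 \<and> k = 3)"
    and A: "\<alpha> \<in> asym_bracelets k n - {r_str n k}"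
    and LNM: "LastNonMax k \<alpha> \<notin> asym_bracelets k n"
    and LS: "LastSymbol k \<alpha> \<notin> asym_bracelets k n"
  shows "(k \<ge> 4 \<longrightarrow> FirstNonMin \<alpha> \<in> asym_bracelets k n)
       \<and> (k = 3 \<and> FirstNonMin \<alpha> \<notin> asym_bracelets 3 n \<longrightarrow>
            (\<exists>\<gamma>. is_palindrome \<gamma> \<and> \<alpha> = [0] @ \<gamma> @ [0, 1, 2])
            \<and> SecondLastNonMax 3 \<alpha> \<in> asym_bracelets 3 n)"
proof -
  have Aa: "\<alpha> \<in> asym_bracelets k n" and nr: "\<alpha> \<noteq> r_str n k" using A by auto
  note ch = Aa[unfolded asym_char]
  have len: "length \<alpha> = n" using ch by simp
  have n3: "n \<ge> 3" and k3: "k \<ge> 3" using nk by auto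
  have symb: "\<And>r. r < n \<Longrightarrow> \<alpha>!r < k" using ch by auto
  define S where "S = {i. i < length \<alpha> \<and> \<alpha> ! i \<noteq> 0}"
  have Sne: "S \<noteq> {}"
  proof
    assume "S = {}"
    then have "\<forall>r<n. \<alpha>!r = 0" unfolding S_def using len by auto
    then have "rev \<alpha> = \<alpha>" using len by (intro nth_equalityI) (auto simp: rev_nth)
    moreover have "lex_less \<alpha> (rotate 0 (rev \<alpha>))"
    proof -
      have "0 < n" using n3 by simp
      then show ?thesis using ch by blast
    qed
    ultimately show False using lex_less_irrefl by simp
  qed
  have Sfin: "finite S" unfolding S_def by simp
  define i0 where "i0 = Min S"
  have i0S: "i0 \<in> S" unfolding i0_def using Sne Sfin by simp
  have i0n: "i0 < n" and i0nz: "\<alpha>!i0 \<noteq> 0" using i0S len unfolding S_def by auto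
  have below: "\<forall>r<i0. \<alpha>!r = 0"
  proof (intro allI impI)
    fix r assume "r < i0"
    then have "r \<notin> S" unfolding i0_def using Sfin Min_le by (metis not_le)
    then show "\<alpha>!r = 0" using \<open>r < i0\<close> i0n len unfolding S_def by auto
  qed
  have FNMeq: "FirstNonMin \<alpha> = \<alpha>[i0 := \<alpha>!i0 - 1]"
    using fnm[of \<alpha> n i0] len i0n unfolding i0_def S_def by simp
  have last: "\<alpha>!(n-1) = k - 1"
  proof (rule ccontr)
    assume h: "\<alpha>!(n-1) \<noteq> k - 1"
    have "\<alpha>!(n-1) < k" using symb n3 by simp
    then have "\<alpha>!(n-1) + 1 < k" using h by linarith
    then have "\<alpha>[n-1 := \<alpha>!(n-1)+1] \<in> asym_bracelets k n" using inc_last[OF Aa] n3 by simp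
    then show False using LNM lnm1[of \<alpha> n k] len n3 h by simp
  qed
  have fnm_good: "FirstNonMin \<alpha> \<in> asym_bracelets k n" if "i0 = 0 \<or> \<alpha>!i0 \<ge> 2"
    using dec_first[OF Aa i0n i0nz below that] FNMeq by simp
  have case1: "\<alpha>!(n-2) \<le> 1" if c: "i0 \<ge> 1" "\<alpha>!i0 = 1"
  proof (rule ccontr)
    assume "\<not> \<alpha>!(n-2) \<le> 1"
    then have "\<alpha>!(n-2) \<ge> 2" by simp
    then have "LastSymbol k \<alpha> \<in> asym_bracelets k n"
      using ls_good[OF Aa n3 k3 last i0n c(1) c(2) below] by simp
    then show False using LS by simp
  qed
  have lnm2eq: "LastNonMax k \<alpha> = \<alpha>[n-2 := \<alpha>!(n-2) + 1]" if "\<alpha>!(n-2) \<le> 1"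
    using lnm2[of \<alpha> n k] len n3 last that k3 by simp
  have part1: "k \<ge> 4 \<longrightarrow> FirstNonMin \<alpha> \<in> asym_bracelets k n"
  proof
    assume k4: "k \<ge> 4"
    show "FirstNonMin \<alpha> \<in> asym_bracelets k n"
    proof (cases "i0 = 0 \<or> \<alpha>!i0 \<ge> 2")
      case True then show ?thesis by (rule fnm_good)
    next
      case False
      then have c: "i0 \<ge> 1" "\<alpha>!i0 = 1" using i0nz by auto
      have le1: "\<alpha>!(n-2) \<le> 1" by (rule case1[OF c])
      have "\<alpha>[n-2 := \<alpha>!(n-2)+1] \<in> asym_bracelets k n"
        by (rule inc_2nd[OF Aa n3 last]) (use le1 k4 in auto)
      then show ?thesis using LNM lnm2eq[OF le1] by simp
    qed
  qed
  have part2: "(\<exists>\<gamma>. is_palindrome \<gamma> \<and> \<alpha> = [0] @ \<gamma> @ [0, 1, 2])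
            \<and> SecondLastNonMax 3 \<alpha> \<in> asym_bracelets 3 n"
    if k3e: "k = 3" and fn: "FirstNonMin \<alpha> \<notin> asym_bracelets 3 n"
  proof -
    have "\<not> (i0 = 0 \<or> \<alpha>!i0 \<ge> 2)" using fnm_good fn k3e by blast
    then have c: "i0 \<ge> 1" "\<alpha>!i0 = 1" using i0nz by auto
    have le1: "\<alpha>!(n-2) \<le> 1" by (rule case1[OF c])
    have H: "\<alpha>!(n-2) + 1 = k - 1 \<and> (\<forall>r\<le>n-3. \<alpha>!r = \<alpha>!(n-3-r))"
    proof (rule ccontr)
      assume "\<not> ?thesis"
      then have "\<alpha>[n-2 := \<alpha>!(n-2)+1] \<in> asym_bracelets k n"
        using inc_2nd[OF Aa n3 last] le1 k3e by simp
      then show False using LNM lnm2eq[OF le1] by simp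
    qed
    have l2: "\<alpha>!(n-2) = 1" using H k3e by simp
    have l1: "\<alpha>!(n-1) = 2" using last k3e by simp
    have pal: "\<forall>r\<le>n-3. \<alpha>!r = \<alpha>!(n-3-r)" using H by simp
    have a0: "\<alpha>!0 = 0" using below c by simp
    have aq: "\<alpha>!(n-3) = 0" using pal a0 by (metis diff_zero le0)
    have a1: "\<alpha>!1 \<noteq> 2"
    proof
      assume h: "\<alpha>!1 = 2"
      have "1 \<in> S" unfolding S_def using h len n3 by auto
      then have "i0 \<le> 1" unfolding i0_def using Sfin by simp
      then have "i0 = 1" using c by simp
      then show False using c h by simp
    qed
    have n5: "n \<ge> 5"
    proof (rule ccontr)
      assume "\<not> n \<ge> 5"
      then have n4: "n = 4" using nk k3e by auto
      have "\<alpha> = r_str n k"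
        unfolding r_str_def using n4 k3e len a0 aq l1 l2
        by (intro nth_equalityI) (auto simp: nth_append less_Suc_eq numeral_eq_Suc)
      then show False using nr by simp
    qed
    define \<gamma> where "\<gamma> = take (n-4) (drop 1 \<alpha>)"
    have lg: "length \<gamma> = n - 4" unfolding \<gamma>_def using len n5 by simp
    have gn: "\<gamma>!r = \<alpha>!(Suc r)" if "r < n - 4" for r unfolding \<gamma>_def using that len n5 by simp
    have palg: "is_palindrome \<gamma>"
      unfolding is_palindrome_def
    proof (rule nth_equalityI)
      fix r assume "r < length \<gamma>"
      then have r: "r < n - 4" using lg by simp
      have "rev \<gamma> ! r = \<gamma> ! (n - 5 - r)" using r lg by (simp add: rev_nth)
      also have "\<dots> = \<alpha>!(Suc (n-5-r))" using gn[of "n-5-r"] r n5 by linarith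
      also have "Suc (n-5-r) = n - 3 - Suc r" using r n5 by linarith
      also have "\<alpha>!(n - 3 - Suc r) = \<alpha>!(Suc r)"
      proof -
        have "Suc r \<le> n - 3" using r by linarith
        with pal have "\<alpha>!(Suc r) = \<alpha>!(n - 3 - Suc r)" by blast
        then show ?thesis by (rule HOL.sym)
      qed
      finally show "\<gamma> ! r = rev \<gamma> ! r" using gn r by simp
    qed simp
    have tailnth: "([0] @ g @ [0, 1, 2]) ! (Suc (length g) + j) = [0,1,2] ! j" if "j < 3" for g :: "nat list" and j
      using that by (simp add: nth_append)
    have form: "\<alpha> = [0] @ \<gamma> @ [0, 1, 2]"
    proof (rule nth_equalityI)
      show "length \<alpha> = length ([0] @ \<gamma> @ [0, 1, 2])" using len lg n5 by simp
      fix r assume "r < length \<alpha>"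
      then have r: "r < n" using len by simp
      consider "r = 0" | "r \<ge> 1 \<and> r \<le> n - 4" | "r = n - 3" | "r = n - 2" | "r = n - 1" using r n5 by linarith
      then show "\<alpha> ! r = ([0] @ \<gamma> @ [0, 1, 2]) ! r"
      proof cases
        case 1 then show ?thesis using a0 by simp
      next
        case 2
        then obtain r' where r': "r = Suc r'" "r' < n - 4" by (cases r) auto
        then show ?thesis using gn lg by (simp add: nth_append)
      next
        case 3
        have "r = Suc (length \<gamma>) + 0" using 3 lg n5 by linarith
        then have "([0] @ \<gamma> @ [0, 1, 2]) ! r = [0,1,2] ! 0" using tailnth[where g=\<gamma> and j=0] by simp
        then show ?thesis using 3 aq by simp
      next
        case 4
        have "r = Suc (length \<gamma>) + 1" using 4 lg n5 by linarith
        then have "([0] @ \<gamma> @ [0, 1, 2]) ! r = [0,1,2] ! 1" using tailnth[where g=\<gamma> and j=1] by simp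
        then show ?thesis using 4 l2 by simp
      next
        case 5
        have "r = Suc (length \<gamma>) + 2" using 5 lg n5 by linarith
        then have "([0] @ \<gamma> @ [0, 1, 2]) ! r = [0,1,2] ! 2" using tailnth[where g=\<gamma> and j=2] by simp
        then show ?thesis using 5 l1 by simp
      qed
    qed
    have "SecondLastNonMax 3 \<alpha> = \<alpha>[n-3 := \<alpha>!(n-3) + 1]"
      using slnm[OF len n3 l1 l2 aq] .
    moreover have "\<alpha>[n-3 := \<alpha>!(n-3) + 1] \<in> asym_bracelets 3 n"
    proof -
      have Aa3: "\<alpha> \<in> asym_bracelets 3 n" using Aa k3e by simp
      show ?thesis by (rule slnm_good[OF Aa3 n5 l1 l2 pal a0 a1])
    qed
    ultimately show ?thesis using palg form by metis
  qed
  show ?thesis using part1 part2 by blast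
qed

end
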